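(* Let $n, r, d$ be positive integers with $n\geqslant r+1$. Then $m_e(K_n^d, r)=\binom{d+r}{d+1}$.
   Context: All graphs are finite, simple and undirected. Given graphs $G$ and $H$, the $H$-bootstrap percolation process on $G$ starts with a set $E_0\subseteq E(G)$ of initially activated edges, and for $i\geqslant1$, $E_i$ consists of $E_{i-1}$ together with all edges $e\in E(G)$ for which there is a subgraph $H_e$ of $G$ isomorphic to $H$ with $e\in E(H_e)$ and $E(H_e)\setminus\{e\}\subseteq E_{i-1}$. $E_0$ is a percolating set if $\bigcup_{i\geqslant0}E_i=E(G)$. The weak saturation number $\mathrm{wsat}(G,H)$ is the minimum size of a percolating set. Define $m_e(G,r)=\mathrm{wsat}(G,S_{r+1})$, where $S_{r+1}$ is the star graph on $r+2$ vertices (one center and $r+1$ leaves). $K_n$ is the complete graph with vertex set $\{0,\ldots,n-1\}$ and $K_n^d$ is the Cartesian product of $d$ copies of $K_n$: vertex set $\{0,\ldots,n-1\}^d$, two vertices adjacent iff they differ in exactly one coordinate. *)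

theory Defs
  imports Main
begin

text \<open>A finite simple graph is represented as a pair (V, E) of a vertex set and a set
of edges, each edge being a 2-element subset of V.\<close>

type_synonym 'a graph = "'a set \<times> 'a set set"

definition verts :: "'a graph \<Rightarrow> 'a set" where "verts G = fst G"
definition edges :: "'a graph \<Rightarrow> 'a set set" where "edges G = snd G"

definition copies :: "'a graph \<Rightarrow> 'b graph \<Rightarrow> 'a set set set" where
  "copies G H = {(\<lambda>e. f ` e) ` edges H | f. inj_on f (verts H) \<and> f ` verts H \<subseteq> verts G
                    \<and> (\<forall>e\<in>edges H. f ` e \<in> edges G)}"

definition boot_step :: "'a graph \<Rightarrow> 'b graph \<Rightarrow> 'a set set \<Rightarrow> 'a set set" where
  "boot_step G H F = F \<union> {e \<in> edges G. \<exists>C \<in> copies G H. e \<in> C \<and> C - {e} \<subseteq> F}"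

definition percolating :: "'a graph \<Rightarrow> 'b graph \<Rightarrow> 'a set set \<Rightarrow> bool" where
  "percolating G H E0 \<longleftrightarrow> E0 \<subseteq> edges G \<and> (\<Union>i. (boot_step G H ^^ i) E0) = edges G"

definition wsat :: "'a graph \<Rightarrow> 'b graph \<Rightarrow> nat" where
  "wsat G H = (LEAST k. \<exists>E0. percolating G H E0 \<and> card E0 = k)"

definition star :: "nat \<Rightarrow> nat graph" where
  "star r = ({0..r+1}, {{0, i} | i. 1 \<le> i \<and> i \<le> r + 1})"

definition m_e :: "'a graph \<Rightarrow> nat \<Rightarrow> nat" where
  "m_e G r = wsat G (star r)"

definition Kpow :: "nat \<Rightarrow> nat \<Rightarrow> nat list graph" where
  "Kpow n d = ({x. length x = d \<and> (\<forall>i<d. x ! i < n)},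
               {{x, y} | x y. length x = d \<and> (\<forall>i<d. x ! i < n) \<and>
                              length y = d \<and> (\<forall>i<d. y ! i < n) \<and>
                              card {i. i < d \<and> x ! i \<noteq> y ! i} = 1})"

end

theory Submission
  imports Defs "HOL-Library.Function_Algebras" "HOL-Library.Nat_Bijection"
    "HOL-Computational_Algebra.Polynomial"
begin


definition val :: "nat \<Rightarrow> (nat \<Rightarrow> real) \<Rightarrow> real \<Rightarrow> real" where
  "val r c t = (\<Sum>k<r. c k * t ^ k)"

lemma lagrange:
  fixes S :: "real set"
  assumes fin: "finite S" and cS: "card S = r"
  shows "val r c t = (\<Sum>s\<in>S. (\<Prod>s'\<in>S-{s}. (t - s') / (s - s')) * val r c s)"
proof (cases "r = 0")
  case True
  then show ?thesis using cS fin by (simp add: val_def)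
next
  case False
  define p where "p = (\<Sum>k<r. monom (c k) k)"
  have pp: "poly p x = val r c x" for x
    by (simp add: p_def val_def poly_sum poly_monom)
  define L where "L s = (\<Prod>s'\<in>S-{s}. smult (1/(s-s')) [:-s', 1:])" for s
  define Q where "Q = (\<Sum>s\<in>S. smult (poly p s) (L s))"
  have polyL: "poly (L s) x = (\<Prod>s'\<in>S-{s}. (x - s') / (s - s'))" for s x
    by (simp add: L_def poly_prod diff_divide_distrib)
  have polyQ: "poly Q x = (\<Sum>s\<in>S. (\<Prod>s'\<in>S-{s}. (x - s') / (s - s')) * val r c s)" for x
    by (simp add: Q_def poly_sum polyL pp mult.commute)
  have degp: "degree p \<le> r - 1"
    unfolding p_def
    by (rule degree_sum_le) (use False in \<open>auto intro: order.trans[OF degree_monom_le]\<close>)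
  have degL: "degree (L s) \<le> r - 1" if "s \<in> S" for s
  proof -
    have "degree (L s) \<le> (\<Sum>s'\<in>S-{s}. degree (smult (1/(s-s')) [:-s', 1:]))"
      unfolding L_def using degree_prod_sum_le[of "S-{s}" "\<lambda>s'. smult (1/(s-s')) [:-s', 1:]"] fin
      by (simp add: o_def)
    also have "\<dots> \<le> (\<Sum>s'\<in>S-{s}. 1)"
      by (rule sum_mono) (simp add: order.trans[OF degree_smult_le])
    also have "\<dots> = r - 1" using cS fin that by simp
    finally show ?thesis .
  qed
  have degQ: "degree Q \<le> r - 1"
    unfolding Q_def
    by (rule degree_sum_le) (use fin degL in \<open>auto intro: order.trans[OF degree_smult_le]\<close>)
  have QS: "poly Q s0 = poly p s0" if s0: "s0 \<in> S" for s0
  proof -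
    have "poly Q s0 = (\<Sum>s\<in>S. (\<Prod>s'\<in>S-{s}. (s0 - s') / (s - s')) * val r c s)"
      by (rule polyQ)
    also have "\<dots> = (\<Prod>s'\<in>S-{s0}. (s0 - s') / (s0 - s')) * val r c s0
        + (\<Sum>s\<in>S-{s0}. (\<Prod>s'\<in>S-{s}. (s0 - s') / (s - s')) * val r c s)"
      using fin s0 by (simp add: sum.remove)
    also have "(\<Sum>s\<in>S-{s0}. (\<Prod>s'\<in>S-{s}. (s0 - s') / (s - s')) * val r c s) = 0"
    proof (rule sum.neutral, intro ballI)
      fix s assume "s \<in> S - {s0}"
      then have "(\<Prod>s'\<in>S-{s}. (s0 - s') / (s - s')) = 0"
        using fin s0 by (intro prod_zero) auto
      then show "(\<Prod>s'\<in>S-{s}. (s0 - s') / (s - s')) * val r c s = 0" by simp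
    qed
    also have "(\<Prod>s'\<in>S-{s0}. (s0 - s') / (s0 - s')) = 1"
      by (rule prod.neutral) auto
    finally show ?thesis by (simp add: pp)
  qed
  define D where "D = p - Q"
  have degD: "degree D \<le> r - 1"
    unfolding D_def using degp degQ by (meson degree_diff_le)
  have "D = 0"
  proof (rule ccontr)
    assume "D \<noteq> 0"
    then have "card {x. poly D x = 0} \<le> degree D" by (rule card_poly_roots_bound)
    moreover have "S \<subseteq> {x. poly D x = 0}" using QS by (auto simp: D_def)
    then have "card S \<le> card {x. poly D x = 0}"
      using poly_roots_finite[OF \<open>D \<noteq> 0\<close>] by (rule card_mono[rotated])
    ultimately show False using degD cS False by linarith
  qed
  then have "poly p t = poly Q t" by (simp add: D_def)
  then show ?thesis by (simp add: pp polyQ)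
qed



definition sc :: "real \<Rightarrow> ((nat \<Rightarrow> real) \<Rightarrow> real) \<Rightarrow> ((nat \<Rightarrow> real) \<Rightarrow> real)" where
  "sc a f = (\<lambda>x. a * f x)"

interpretation vs: vector_space sc
  by unfold_locales (auto simp: sc_def fun_eq_iff algebra_simps)

lemma sum_fun_apply: "(sum f A) x = (\<Sum>a\<in>A. f a x)"
  by (induction A rule: infinite_finite_induct) auto

definition V :: "nat \<Rightarrow> nat \<Rightarrow> nat list set" where
  "V n d = {x. length x = d \<and> (\<forall>i<d. x ! i < n)}"

definition par :: "nat \<Rightarrow> nat \<Rightarrow> real" where
  "par j v = real (prod_encode (j, v))"

lemma par_eq_iff[simp]: "par j v = par j' v' \<longleftrightarrow> j = j' \<and> v = v'"
  by (auto simp: par_def prod_encode_eq)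

definition P :: "nat \<Rightarrow> nat list set \<Rightarrow> real set" where
  "P d e = {par j (v ! j) | v j. v \<in> e \<and> j < d}"

definition W :: "nat \<Rightarrow> nat \<Rightarrow> nat list set \<Rightarrow> (nat \<Rightarrow> real) \<Rightarrow> real" where
  "W d r e = (\<lambda>c. \<Prod>t\<in>P d e. val r c t)"

lemma verts_Kpow: "verts (Kpow n d) = V n d"
  by (simp add: verts_def Kpow_def V_def)

lemma diffset_sym: "{i. i < d \<and> x ! i \<noteq> y ! i} = {i. i < d \<and> y ! i \<noteq> x ! i}"
  by auto

lemma edge_iff: "{x, y} \<in> edges (Kpow n d) \<longleftrightarrow>
   x \<in> V n d \<and> y \<in> V n d \<and> card {i. i < d \<and> x ! i \<noteq> y ! i} = 1"
proof
  assume "{x, y} \<in> edges (Kpow n d)"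
  then have "\<exists>x' y'. {x, y} = {x', y'} \<and> x' \<in> V n d \<and> y' \<in> V n d \<and>
     card {i. i < d \<and> x' ! i \<noteq> y' ! i} = 1"
    unfolding edges_def Kpow_def V_def by simp
  then obtain x' y' where e: "{x, y} = {x', y'}" and c: "x' \<in> V n d" "y' \<in> V n d"
     "card {i. i < d \<and> x' ! i \<noteq> y' ! i} = 1" by blast
  from e have "(x = x' \<and> y = y') \<or> (x = y' \<and> y = x')" by (simp add: doubleton_eq_iff)
  then show "x \<in> V n d \<and> y \<in> V n d \<and> card {i. i < d \<and> x ! i \<noteq> y ! i} = 1"
  proof
    assume "x = x' \<and> y = y'" then show ?thesis using c by simp
  next
    assume "x = y' \<and> y = x'" then show ?thesis using c diffset_sym[of d x' y'] by simp
  qed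
next
  assume "x \<in> V n d \<and> y \<in> V n d \<and> card {i. i < d \<and> x ! i \<noteq> y ! i} = 1"
  then show "{x, y} \<in> edges (Kpow n d)"
    unfolding edges_def Kpow_def V_def by auto
qed

lemma edge_form: "e \<in> edges (Kpow n d) \<Longrightarrow> \<exists>x y. e = {x, y} \<and> {x, y} \<in> edges (Kpow n d)"
  by (auto simp: edges_def Kpow_def)

lemma card1_iff: "card {i. i < d \<and> x ! i \<noteq> y ! i} = 1 \<longleftrightarrow>
   (\<exists>j<d. x ! j \<noteq> y ! j \<and> (\<forall>i<d. i \<noteq> j \<longrightarrow> x ! i = y ! i))"
proof
  assume "card {i. i < d \<and> x ! i \<noteq> y ! i} = 1"
  then obtain j where "{i. i < d \<and> x ! i \<noteq> y ! i} = {j}" by (rule card_1_singletonE)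
  then show "\<exists>j<d. x ! j \<noteq> y ! j \<and> (\<forall>i<d. i \<noteq> j \<longrightarrow> x ! i = y ! i)"
    by (metis (mono_tags, lifting) insertI1 mem_Collect_eq singletonD)
next
  assume "\<exists>j<d. x ! j \<noteq> y ! j \<and> (\<forall>i<d. i \<noteq> j \<longrightarrow> x ! i = y ! i)"
  then obtain j where j: "j < d" "x ! j \<noteq> y ! j" "\<forall>i<d. i \<noteq> j \<longrightarrow> x ! i = y ! i" by blast
  then have "{i. i < d \<and> x ! i \<noteq> y ! i} = {j}" by auto
  then show "card {i. i < d \<and> x ! i \<noteq> y ! i} = 1" by simp
qed

lemma adjE:
  assumes "{x, y} \<in> edges (Kpow n d)"
  obtains j where "x \<in> V n d" "y \<in> V n d" "j < d" "x ! j \<noteq> y ! j"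
    "\<forall>i<d. i \<noteq> j \<longrightarrow> x ! i = y ! i"
  using assms unfolding edge_iff card1_iff by blast

lemma adjI:
  assumes "x \<in> V n d" "y \<in> V n d" "j < d" "x ! j \<noteq> y ! j" "\<forall>i<d. i \<noteq> j \<longrightarrow> x ! i = y ! i"
  shows "{x, y} \<in> edges (Kpow n d)"
  unfolding edge_iff card1_iff using assms by blast

definition tp :: "nat \<Rightarrow> nat list \<Rightarrow> nat list \<Rightarrow> real" where
  "tp d x y = (let j = (SOME j. j < d \<and> x ! j \<noteq> y ! j) in par j (y ! j))"

lemma tp_eq:
  assumes "j < d" "x ! j \<noteq> y ! j" "\<forall>i<d. i \<noteq> j \<longrightarrow> x ! i = y ! i"
  shows "tp d x y = par j (y ! j)"
proof -
  have "(SOME j. j < d \<and> x ! j \<noteq> y ! j) = j"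
    by (rule some_equality) (use assms in auto)
  then show ?thesis by (simp add: tp_def)
qed

lemma P_single: "P d {x} = (\<lambda>j. par j (x ! j)) ` {..<d}"
  by (auto simp: P_def)

lemma finite_P_single: "finite (P d {x})"
  by (simp add: P_single)

lemma P_adj:
  assumes "j < d" "x ! j \<noteq> y ! j" "\<forall>i<d. i \<noteq> j \<longrightarrow> x ! i = y ! i"
  shows "P d {x, y} = insert (par j (y ! j)) (P d {x})" "par j (y ! j) \<notin> P d {x}"
proof -
  have U: "P d {x, y} = (\<lambda>i. par i (x ! i)) ` {..<d} \<union> (\<lambda>i. par i (y ! i)) ` {..<d}"
    by (auto simp: P_def)
  have "(\<lambda>i. par i (y ! i)) ` {..<d} \<subseteq> insert (par j (y ! j)) ((\<lambda>i. par i (x ! i)) ` {..<d})"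
  proof
    fix t assume "t \<in> (\<lambda>i. par i (y ! i)) ` {..<d}"
    then obtain i where i: "i < d" "t = par i (y ! i)" by blast
    show "t \<in> insert (par j (y ! j)) ((\<lambda>i. par i (x ! i)) ` {..<d})"
    proof (cases "i = j")
      case True then show ?thesis using i by simp
    next
      case False
      then have "t = par i (x ! i)" using i assms(3) by simp
      then show ?thesis using i by blast
    qed
  qed
  then show "P d {x, y} = insert (par j (y ! j)) (P d {x})"
    unfolding U P_single using assms(1) by auto
  show "par j (y ! j) \<notin> P d {x}"
    using assms by (auto simp: P_single)
qed

lemma W_adj:
  assumes "{x, y} \<in> edges (Kpow n d)"
  shows "W d r {x, y} = (\<lambda>c. (\<Prod>t\<in>P d {x}. val r c t) * val r c (tp d x y))"
proof -
  obtain j where j: "j < d" "x ! j \<noteq> y ! j" "\<forall>i<d. i \<noteq> j \<longrightarrow> x ! i = y ! i"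
    using assms by (rule adjE)
  show ?thesis
    unfolding W_def P_adj(1)[OF j] tp_eq[OF j]
    using P_adj(2)[OF j] finite_P_single by (simp add: mult.commute)
qed

lemma tp_inj:
  assumes "{x, y} \<in> edges (Kpow n d)" "{x, y'} \<in> edges (Kpow n d)" "tp d x y = tp d x y'"
  shows "y = y'"
proof -
  obtain j where j: "y \<in> V n d" "j < d" "x ! j \<noteq> y ! j" "\<forall>i<d. i \<noteq> j \<longrightarrow> x ! i = y ! i"
    using assms(1) by (rule adjE)
  obtain j' where j': "y' \<in> V n d" "j' < d" "x ! j' \<noteq> y' ! j'" "\<forall>i<d. i \<noteq> j' \<longrightarrow> x ! i = y' ! i"
    using assms(2) by (rule adjE)
  have "j = j' \<and> y ! j = y' ! j'"
    using assms(3) tp_eq[OF j(2-4)] tp_eq[OF j'(2-4)] par_eq_iff by metis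
  note jj = conjunct1[OF this] conjunct2[OF this]
  show ?thesis
  proof (rule nth_equalityI)
    show "length y = length y'" using j(1) j'(1) by (simp add: V_def)
    fix i assume "i < length y"
    then have "i < d" using j(1) by (simp add: V_def)
    then show "y ! i = y' ! i" using jj j j' by (cases "i = j") auto
  qed
qed

lemma span_step:
  assumes Y: "finite Y" "card Y = r" and adjY: "\<forall>y\<in>Y. {x, y} \<in> edges (Kpow n d)"
    and adj0: "{x, y0} \<in> edges (Kpow n d)"
  shows "W d r {x, y0} \<in> vs.span ((\<lambda>y. W d r {x, y}) ` Y)"
proof -
  define S where "S = tp d x ` Y"
  have inj: "inj_on (tp d x) Y"
    by (rule inj_onI) (use adjY tp_inj in blast)
  have cS: "card S = r" using Y inj by (simp add: S_def card_image)
  have fS: "finite S" using Y by (simp add: S_def)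
  define L where "L s = (\<Prod>s'\<in>S-{s}. (tp d x y0 - s') / (s - s'))" for s
  define M where "M c = (\<Prod>t\<in>P d {x}. val r c t)" for c
  have "W d r {x, y0} = (\<Sum>y\<in>Y. sc (L (tp d x y)) (W d r {x, y}))"
  proof (rule ext)
    fix c
    have "W d r {x, y0} c = M c * val r c (tp d x y0)"
      by (simp add: W_adj[OF adj0] M_def)
    also have "val r c (tp d x y0) = (\<Sum>s\<in>S. L s * val r c s)"
      unfolding L_def by (rule lagrange[OF fS cS])
    also have "\<dots> = (\<Sum>y\<in>Y. L (tp d x y) * val r c (tp d x y))"
      unfolding S_def by (rule sum.reindex[OF inj, unfolded o_def])
    also have "M c * \<dots> = (\<Sum>y\<in>Y. L (tp d x y) * (M c * val r c (tp d x y)))"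
      by (simp add: sum_distrib_left algebra_simps)
    also have "\<dots> = (\<Sum>y\<in>Y. sc (L (tp d x y)) (W d r {x, y}) c)"
    proof (rule sum.cong[OF refl])
      fix y assume "y \<in> Y"
      then show "L (tp d x y) * (M c * val r c (tp d x y)) = sc (L (tp d x y)) (W d r {x, y}) c"
        using W_adj[OF adjY[rule_format, OF \<open>y \<in> Y\<close>]] by (simp add: M_def sc_def)
    qed
    also have "\<dots> = (\<Sum>y\<in>Y. sc (L (tp d x y)) (W d r {x, y})) c"
      by (simp add: sum_fun_apply)
    finally show "W d r {x, y0} c = (\<Sum>y\<in>Y. sc (L (tp d x y)) (W d r {x, y})) c" .
  qed
  also have "\<dots> \<in> vs.span ((\<lambda>y. W d r {x, y}) ` Y)"
    by (intro vs.span_sum vs.span_scale vs.span_base) auto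
  finally show ?thesis .
qed



lemma verts_star: "verts (star r) = {0..r+1}"
  by (simp add: verts_def star_def)

lemma edges_star: "edges (star r) = {{0, i} | i. 1 \<le> i \<and> i \<le> r + 1}"
  by (simp add: edges_def star_def)

lemma copiesE:
  assumes "C \<in> copies G (star r)"
  obtains f where "C = (\<lambda>e. f ` e) ` edges (star r)" "inj_on f {0..r+1}"
    "f ` {0..r+1} \<subseteq> verts G" "\<And>i. 1 \<le> i \<Longrightarrow> i \<le> r + 1 \<Longrightarrow> {f 0, f i} \<in> edges G"
proof -
  from assms obtain f where f: "C = (\<lambda>e. f ` e) ` edges (star r)" "inj_on f (verts (star r))"
    "f ` verts (star r) \<subseteq> verts G" "\<forall>e\<in>edges (star r). f ` e \<in> edges G"
    unfolding copies_def by blast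
  have "{f 0, f i} \<in> edges G" if "1 \<le> i" "i \<le> r + 1" for i
  proof -
    have "{0, i} \<in> edges (star r)" using that by (auto simp: edges_star)
    then show ?thesis using f(4) by force
  qed
  then show ?thesis using that f by (simp add: verts_star)
qed

lemma W_closure:
  "e \<in> (boot_step (Kpow n d) (star r) ^^ i) E0 \<Longrightarrow> W d r e \<in> vs.span (W d r ` E0)"
proof (induction i arbitrary: e)
  case 0
  then show ?case by (simp add: vs.span_base)
next
  case (Suc i)
  define F where "F = (boot_step (Kpow n d) (star r) ^^ i) E0"
  have IH: "\<And>e. e \<in> F \<Longrightarrow> W d r e \<in> vs.span (W d r ` E0)" using Suc.IH by (simp add: F_def)
  from Suc.prems have "e \<in> boot_step (Kpow n d) (star r) F" by (simp add: F_def)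
  then have "e \<in> F \<or> (\<exists>C\<in>copies (Kpow n d) (star r). e \<in> C \<and> C - {e} \<subseteq> F)"
    unfolding boot_step_def by blast
  then show ?case
  proof
    assume "e \<in> F" then show ?thesis by (rule IH)
  next
    assume "\<exists>C\<in>copies (Kpow n d) (star r). e \<in> C \<and> C - {e} \<subseteq> F"
    then obtain C where C: "C \<in> copies (Kpow n d) (star r)" "e \<in> C" "C - {e} \<subseteq> F" by blast
    obtain f where f: "C = (\<lambda>e. f ` e) ` edges (star r)" "inj_on f {0..r+1}"
      "f ` {0..r+1} \<subseteq> verts (Kpow n d)"
      "\<And>i. 1 \<le> i \<Longrightarrow> i \<le> r + 1 \<Longrightarrow> {f 0, f i} \<in> edges (Kpow n d)"
    proof (rule copiesE[OF C(1)])
      fix g assume "C = (\<lambda>e. g ` e) ` edges (star r)" "inj_on g {0..r+1}"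
        "g ` {0..r+1} \<subseteq> verts (Kpow n d)"
        "\<And>i. 1 \<le> i \<Longrightarrow> i \<le> r + 1 \<Longrightarrow> {g 0, g i} \<in> edges (Kpow n d)"
      then show thesis using that by blast
    qed
    from C(2) f(1) obtain i0 where i0: "1 \<le> i0" "i0 \<le> r + 1" "e = {f 0, f i0}"
      by (auto simp: edges_star)
    define I where "I = {1..r+1} - {i0}"
    define Y where "Y = f ` I"
    have injI: "inj_on f I" using f(2) by (rule inj_on_subset) (auto simp: I_def)
    have cI: "card I = r" using i0 by (simp add: I_def)
    have fY: "finite Y" "card Y = r" using injI cI by (auto simp: Y_def I_def card_image)
    have adjY: "\<forall>y\<in>Y. {f 0, y} \<in> edges (Kpow n d)" using f(4) by (auto simp: Y_def I_def)
    have step: "W d r {f 0, f i0} \<in> vs.span ((\<lambda>y. W d r {f 0, y}) ` Y)"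
      by (rule span_step[OF fY adjY f(4)[OF i0(1,2)]])
    have "(\<lambda>y. W d r {f 0, y}) ` Y \<subseteq> vs.span (W d r ` E0)"
    proof
      fix w assume "w \<in> (\<lambda>y. W d r {f 0, y}) ` Y"
      then obtain i where i: "i \<in> I" "w = W d r {f 0, f i}" by (auto simp: Y_def)
      have inC: "{f 0, f i} \<in> C"
      proof -
        have "{0, i} \<in> edges (star r)" using i(1) by (auto simp: I_def edges_star)
        then show ?thesis unfolding f(1) by (rule image_eqI[rotated]) simp
      qed
      have "{f 0, f i} \<noteq> e"
      proof
        assume "{f 0, f i} = e"
        then have "f i = f 0 \<or> f i = f i0" using i0(3) by (auto simp: doubleton_eq_iff)
        moreover have "i \<noteq> 0" "i \<noteq> i0" "i \<in> {0..r+1}" using i(1) by (auto simp: I_def)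
        moreover have "0 \<in> {0..r+1}" "i0 \<in> {0..r+1}" using i0 by auto
        ultimately show False using inj_onD[OF f(2)] by metis
      qed
      then have "{f 0, f i} \<in> F" using inC C(3) by blast
      then show "w \<in> vs.span (W d r ` E0)" using IH i(2) by simp
    qed
    then have "vs.span ((\<lambda>y. W d r {f 0, y}) ` Y) \<subseteq> vs.span (vs.span (W d r ` E0))"
      by (rule vs.span_mono)
    then have "vs.span ((\<lambda>y. W d r {f 0, y}) ` Y) \<subseteq> vs.span (W d r ` E0)"
      by (simp only: vs.span_span)
    then show ?thesis using step i0(3) by blast
  qed
qed



definition Q :: "nat \<Rightarrow> nat \<Rightarrow> (nat \<times> nat \<times> nat list) set" where
  "Q r m = {(a, b, z). a < b \<and> length z = m \<and> b + sum_list z \<le> r}"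

definition ed :: "nat \<times> nat \<times> nat list \<Rightarrow> nat list set" where
  "ed \<tau> = (case \<tau> of (a, b, z) \<Rightarrow> {a # z, b # z})"

definition RR :: "nat \<times> nat \<times> nat list \<Rightarrow> real set" where
  "RR \<tau> = (case \<tau> of (a, b, z) \<Rightarrow>
     par 0 ` ({..<b} - {a}) \<union> (\<Union>j\<in>{..<length z}. par (Suc j) ` {..<z ! j}))"

definition qq :: "nat \<times> nat \<times> nat list \<Rightarrow> real poly" where
  "qq \<tau> = (\<Prod>\<rho>\<in>RR \<tau>. [:-\<rho>, 1:])"

definition wt :: "nat \<times> nat \<times> nat list \<Rightarrow> nat" where
  "wt \<tau> = (case \<tau> of (a, b, z) \<Rightarrow> a + b + sum_list z)"

lemma finite_RR: "finite (RR \<tau>)"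
  by (auto simp: RR_def split: prod.splits)

lemma card_RR:
  assumes "(a, b, z) \<in> Q r m"
  shows "card (RR (a, b, z)) < r"
proof -
  have ab: "a < b" and s: "b + sum_list z \<le> r" using assms by (auto simp: Q_def)
  have "card (RR (a, b, z)) \<le> card (par 0 ` ({..<b} - {a}))
      + card (\<Union>j\<in>{..<length z}. par (Suc j) ` {..<z ! j})"
    unfolding RR_def by (simp add: card_Un_le)
  also have "card (par 0 ` ({..<b} - {a})) \<le> b - 1"
    using card_image_le[of "{..<b} - {a}" "par 0"] ab by simp
  also have "card (\<Union>j\<in>{..<length z}. par (Suc j) ` {..<z ! j}) \<le> (\<Sum>j\<in>{..<length z}. card (par (Suc j) ` {..<z ! j}))"
    by (rule card_UN_le) simp
  also have "\<dots> \<le> (\<Sum>j\<in>{..<length z}. z ! j)"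
    by (rule sum_mono) (metis card_image_le card_lessThan finite_lessThan)
  also have "\<dots> = sum_list z" by (simp add: sum_list_sum_nth atLeast0LessThan)
  finally show ?thesis using ab s by linarith
qed

lemma degree_qq: "degree (qq \<tau>) \<le> card (RR \<tau>)"
proof -
  have "degree (qq \<tau>) \<le> (\<Sum>\<rho>\<in>RR \<tau>. degree [:-\<rho>, 1::real:])"
    unfolding qq_def using degree_prod_sum_le[OF finite_RR, of "\<lambda>\<rho>. [:-\<rho>, 1::real:]" \<tau>]
    by (simp add: o_def)
  also have "\<dots> = card (RR \<tau>)" by simp
  finally show ?thesis .
qed

lemma val_coeff:
  assumes "degree p < r"
  shows "val r (\<lambda>k. coeff p k) t = poly p t"
proof -
  have "poly p t = (\<Sum>i\<le>degree p. coeff p i * t ^ i)" by (rule poly_altdef)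
  also have "\<dots> = (\<Sum>i<r. coeff p i * t ^ i)"
    by (rule sum.mono_neutral_left) (use assms in \<open>auto simp: coeff_eq_0\<close>)
  finally show ?thesis by (simp add: val_def)
qed

lemma poly_qq_zero: "poly (qq \<tau>) t = 0 \<longleftrightarrow> t \<in> RR \<tau>"
  by (simp add: qq_def poly_prod finite_RR prod_zero_iff)

lemma finite_P: "finite e \<Longrightarrow> finite (P d e)"
proof -
  assume "finite e"
  have "P d e = (\<lambda>(v, j). par j (v ! j)) ` (e \<times> {..<d})" by (auto simp: P_def)
  then show ?thesis using \<open>finite e\<close> by simp
qed

lemma W_eval:
  assumes "\<tau> \<in> Q r m" "finite e"
  shows "W d r e (\<lambda>k. coeff (qq \<tau>) k) = (\<Prod>t\<in>P d e. poly (qq \<tau>) t)"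
proof -
  obtain a b z where t: "\<tau> = (a, b, z)" by (cases \<tau>)
  have "degree (qq \<tau>) < r" using degree_qq[of \<tau>] card_RR[of a b z r m] assms(1) t by simp
  then show ?thesis by (simp add: W_def val_coeff)
qed

lemma W_eval_nz:
  assumes "\<tau> \<in> Q r m" "finite e"
  shows "W d r e (\<lambda>k. coeff (qq \<tau>) k) \<noteq> 0 \<longleftrightarrow> P d e \<inter> RR \<tau> = {}"
  using assms by (auto simp: W_eval prod_zero_iff finite_P poly_qq_zero)

lemma P_ed: "P (Suc m) (ed (a, b, z)) = {par 0 a, par 0 b} \<union> (\<lambda>j. par (Suc j) (z ! j)) ` {..<m}"
proof -
  have "P (Suc m) (ed (a, b, z)) = (\<lambda>j. par j ((a # z) ! j)) ` {..<Suc m} \<union> (\<lambda>j. par j ((b # z) ! j)) ` {..<Suc m}"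
    by (auto simp: P_def ed_def)
  also have "(\<lambda>j. par j ((a # z) ! j)) ` {..<Suc m} = insert (par 0 a) ((\<lambda>j. par (Suc j) (z ! j)) ` {..<m})"
    by (simp add: lessThan_Suc_eq_insert_0 image_image)
  also have "(\<lambda>j. par j ((b # z) ! j)) ` {..<Suc m} = insert (par 0 b) ((\<lambda>j. par (Suc j) (z ! j)) ` {..<m})"
    by (simp add: lessThan_Suc_eq_insert_0 image_image)
  finally show ?thesis by auto
qed

lemma disj_self:
  assumes "(a, b, z) \<in> Q r m"
  shows "P (Suc m) (ed (a, b, z)) \<inter> RR (a, b, z) = {}"
proof -
  have "a < b" using assms by (simp add: Q_def)
  have "t \<notin> RR (a, b, z)" if "t \<in> P (Suc m) (ed (a, b, z))" for t
  proof -
    from that consider "t = par 0 a" | "t = par 0 b" | j where "j < m" "t = par (Suc j) (z ! j)"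
      by (auto simp: P_ed)
    then show ?thesis
    proof cases
      case 1 then show ?thesis by (auto simp: RR_def)
    next
      case 2 then show ?thesis by (auto simp: RR_def)
    next
      case 3 then show ?thesis by (auto simp: RR_def)
    qed
  qed
  then show ?thesis by blast
qed

lemma sum_list_pointwise:
  "length (z::nat list) = length z' \<Longrightarrow> (\<forall>j<length z. z ! j \<le> z' ! j) \<Longrightarrow>
    sum_list z \<le> sum_list z' \<and> (sum_list z = sum_list z' \<longrightarrow> z = z')"
proof (induction z z' rule: list_induct2)
  case Nil
  then show ?case by simp
next
  case (Cons x xs y ys)
  have "x \<le> y" using Cons.prems by force
  moreover have "\<forall>j<length xs. xs ! j \<le> ys ! j" using Cons.prems by force
  then have "sum_list xs \<le> sum_list ys \<and> (sum_list xs = sum_list ys \<longrightarrow> xs = ys)"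
    by (rule Cons.IH)
  ultimately show ?case by auto
qed

lemma triangular:
  assumes "(a, b, z) \<in> Q r m" "(a', b', z') \<in> Q r m"
    and "P (Suc m) (ed (a', b', z')) \<inter> RR (a, b, z) = {}"
  shows "(a', b', z') = (a, b, z) \<or> wt (a, b, z) < wt (a', b', z')"
proof -
  have ab: "a < b" "length z = m" and ab': "a' < b'" "length z' = m"
    using assms(1,2) by (auto simp: Q_def)
  have zz: "\<forall>j<length z. z ! j \<le> z' ! j"
  proof (intro allI impI)
    fix j assume j: "j < length z"
    show "z ! j \<le> z' ! j"
    proof (rule ccontr)
      assume "\<not> z ! j \<le> z' ! j"
      then have "par (Suc j) (z' ! j) \<in> par (Suc j) ` {..<z ! j}" by simp
      then have "par (Suc j) (z' ! j) \<in> (\<Union>j\<in>{..<length z}. par (Suc j) ` {..<z ! j})"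
        using j by blast
      then have "par (Suc j) (z' ! j) \<in> RR (a, b, z)" by (simp add: RR_def)
      moreover have "par (Suc j) (z' ! j) \<in> P (Suc m) (ed (a', b', z'))"
        using j ab by (auto simp: P_ed)
      ultimately show False using assms(3) by blast
    qed
  qed
  have s: "sum_list z \<le> sum_list z' \<and> (sum_list z = sum_list z' \<longrightarrow> z = z')"
    by (rule sum_list_pointwise) (use ab ab' zz in auto)
  have "par 0 a' \<notin> RR (a, b, z)" "par 0 b' \<notin> RR (a, b, z)"
    using assms(3) by (auto simp: P_ed)
  then have A: "\<not> (a' < b \<and> a' \<noteq> a)" and B: "\<not> (b' < b \<and> b' \<noteq> a)"
    by (auto simp: RR_def)
  show ?thesis
  proof (cases "a' = a")
    case True
    then have "b \<le> b'" using B ab' by auto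
    then show ?thesis using s True by (auto simp: wt_def)
  next
    case False
    then have "b \<le> a'" using A by auto
    then show ?thesis using s ab ab' by (auto simp: wt_def)
  qed
qed



definition ct :: "nat \<times> nat \<times> nat list \<Rightarrow> nat \<Rightarrow> real" where
  "ct \<tau> = (\<lambda>k. coeff (qq \<tau>) k)"

lemma finite_ed: "finite (ed \<tau>)"
  by (auto simp: ed_def split: prod.splits)

lemma Wt_nz:
  assumes "\<tau> \<in> Q r m" "\<tau>' \<in> Q r m" "W (Suc m) r (ed \<tau>') (ct \<tau>) \<noteq> 0"
  shows "\<tau>' = \<tau> \<or> wt \<tau> < wt \<tau>'"
proof -
  obtain a b z where t: "\<tau> = (a, b, z)" by (cases \<tau>)
  obtain a' b' z' where t': "\<tau>' = (a', b', z')" by (cases \<tau>')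
  have "P (Suc m) (ed \<tau>') \<inter> RR \<tau> = {}"
    using W_eval_nz[OF assms(1) finite_ed] assms(3) by (simp add: ct_def)
  then show ?thesis using triangular[of a b z r m a' b' z'] assms(1,2) t t' by simp
qed

lemma Wt_self:
  assumes "\<tau> \<in> Q r m"
  shows "W (Suc m) r (ed \<tau>) (ct \<tau>) \<noteq> 0"
proof -
  obtain a b z where t: "\<tau> = (a, b, z)" by (cases \<tau>)
  show ?thesis
    using W_eval_nz[OF assms finite_ed] disj_self[of a b z r m] assms t by (simp add: ct_def)
qed

lemma finite_Q: "finite (Q r m)"
proof -
  have "Q r m \<subseteq> {..r} \<times> {..r} \<times> {z. set z \<subseteq> {..r} \<and> length z = m}"
  proof
    fix \<tau> assume "\<tau> \<in> Q r m"
    then obtain a b z where t: "\<tau> = (a, b, z)" "a < b" "length z = m" "b + sum_list z \<le> r"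
      by (auto simp: Q_def)
    have "set z \<subseteq> {..r}" using t(4) member_le_sum_list[of _ z] by fastforce
    then show "\<tau> \<in> {..r} \<times> {..r} \<times> {z. set z \<subseteq> {..r} \<and> length z = m}" using t by auto
  qed
  moreover have "finite ({..r} \<times> {..r} \<times> {z. set z \<subseteq> {..r} \<and> length z = m})"
    by (intro finite_cartesian_product finite_lists_length_eq) auto
  ultimately show ?thesis by (rule finite_subset)
qed

lemma inj_Wt: "inj_on (\<lambda>\<tau>. W (Suc m) r (ed \<tau>)) (Q r m)"
proof (rule inj_onI)
  fix \<tau> \<tau>' assume t: "\<tau> \<in> Q r m" "\<tau>' \<in> Q r m" and eq: "W (Suc m) r (ed \<tau>) = W (Suc m) r (ed \<tau>')"
  have 1: "\<tau>' = \<tau> \<or> wt \<tau> < wt \<tau>'" using Wt_nz[OF t] Wt_self[OF t(1)] eq by simp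
  have 2: "\<tau> = \<tau>' \<or> wt \<tau>' < wt \<tau>" using Wt_nz[OF t(2) t(1)] Wt_self[OF t(2)] eq by simp
  from 1 2 show "\<tau> = \<tau>'" by auto
qed

lemma indep_aux:
  assumes sum0: "(\<Sum>v\<in>(\<lambda>\<tau>. W (Suc m) r (ed \<tau>)) ` Q r m. sc (g v) v) = 0"
    and x: "x \<in> (\<lambda>\<tau>. W (Suc m) r (ed \<tau>)) ` Q r m"
  shows "g x = 0"
proof -
  define Wt where "Wt \<tau> = W (Suc m) r (ed \<tau>)" for \<tau>
  define Z where "Z = {\<tau>\<in>Q r m. g (Wt \<tau>) \<noteq> 0}"
  show "g x = 0"
  proof (rule ccontr)
    assume gx: "g x \<noteq> 0"
    from x obtain \<tau>0 where t0: "\<tau>0 \<in> Q r m" "x = W (Suc m) r (ed \<tau>0)" by blast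
    then have "x = Wt \<tau>0" by (simp only: Wt_def)
    then have "\<tau>0 \<in> Z" using gx t0(1) unfolding Z_def by blast
    have fZ: "finite Z" using finite_Q by (simp add: Z_def)
    define M where "M = Max (wt ` Z)"
    have "M \<in> wt ` Z" unfolding M_def using fZ \<open>\<tau>0 \<in> Z\<close> by (intro Max_in) auto
    then obtain \<tau> where \<tau>: "\<tau> \<in> Z" "wt \<tau> = M" by blast
    have maxi: "wt \<tau>' \<le> wt \<tau>" if "\<tau>' \<in> Z" for \<tau>'
      unfolding \<tau>(2) M_def using fZ that by (intro Max_ge) auto
    have tQ: "\<tau> \<in> Q r m" using \<tau>(1) by (simp add: Z_def)
    have "0 = (\<Sum>x\<in>Wt ` Q r m. sc (g x) x) (ct \<tau>)" using sum0 unfolding Wt_def by simp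
    also have "\<dots> = (\<Sum>x\<in>Wt ` Q r m. g x * x (ct \<tau>))" by (simp add: sum_fun_apply sc_def)
    also have "\<dots> = (\<Sum>\<tau>'\<in>Q r m. g (Wt \<tau>') * Wt \<tau>' (ct \<tau>))"
      using sum.reindex[OF inj_Wt[of m r, folded Wt_def], of "\<lambda>x. g x * x (ct \<tau>)"] by simp
    also have "\<dots> = g (Wt \<tau>) * Wt \<tau> (ct \<tau>) + (\<Sum>\<tau>'\<in>Q r m - {\<tau>}. g (Wt \<tau>') * Wt \<tau>' (ct \<tau>))"
      using tQ finite_Q by (simp add: sum.remove)
    also have "(\<Sum>\<tau>'\<in>Q r m - {\<tau>}. g (Wt \<tau>') * Wt \<tau>' (ct \<tau>)) = 0"
    proof (rule sum.neutral, rule ballI)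
      fix \<tau>' assume t': "\<tau>' \<in> Q r m - {\<tau>}"
      show "g (Wt \<tau>') * Wt \<tau>' (ct \<tau>) = 0"
      proof (rule ccontr)
        assume "g (Wt \<tau>') * Wt \<tau>' (ct \<tau>) \<noteq> 0"
        then have g': "g (Wt \<tau>') \<noteq> 0" and w': "Wt \<tau>' (ct \<tau>) \<noteq> 0" by auto
        have "\<tau>' \<in> Z" using g' t' by (simp add: Z_def)
        then have "wt \<tau>' \<le> wt \<tau>" by (rule maxi)
        moreover have "\<tau>' = \<tau> \<or> wt \<tau> < wt \<tau>'"
          using Wt_nz[OF tQ _ w'[unfolded Wt_def]] t' by simp
        ultimately show False using t' by auto
      qed
    qed
    finally have "g (Wt \<tau>) * Wt \<tau> (ct \<tau>) = 0" by simp
    moreover have "Wt \<tau> (ct \<tau>) \<noteq> 0" using Wt_self[OF tQ] by (simp add: Wt_def)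
    ultimately have "g (Wt \<tau>) = 0" by simp
    then show False using \<tau>(1) by (simp add: Z_def)
  qed
qed

lemma indep_Wt: "vs.independent ((\<lambda>\<tau>. W (Suc m) r (ed \<tau>)) ` Q r m)"
  apply (rule vs.independent_if_scalars_zero[of "(\<lambda>\<tau>. W (Suc m) r (ed \<tau>)) ` Q r m"])
  using finite_Q apply simp
  apply (erule indep_aux)
  apply assumption
  done

lemma finite_V: "finite (V n d)"
proof -
  have "V n d \<subseteq> {xs. set xs \<subseteq> {..<n} \<and> length xs = d}"
    by (auto simp: V_def in_set_conv_nth)
  then show ?thesis by (rule finite_subset) (intro finite_lists_length_eq, simp)
qed

lemma finite_edges: "finite (edges (Kpow n d))"
proof -
  have "edges (Kpow n d) \<subseteq> Pow (V n d)"
    by (auto simp: edges_def Kpow_def V_def)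
  then show ?thesis using finite_V by (meson finite_Pow_iff finite_subset)
qed

lemma lower:
  assumes perc: "percolating (Kpow n (Suc m)) (star r) E0"
    and sub: "ed ` Q r m \<subseteq> edges (Kpow n (Suc m))"
  shows "card (Q r m) \<le> card E0"
proof -
  let ?G = "Kpow n (Suc m)"
  have E0: "E0 \<subseteq> edges ?G" and cl: "(\<Union>i. (boot_step ?G (star r) ^^ i) E0) = edges ?G"
    using perc by (auto simp: percolating_def)
  have fE0: "finite E0" using E0 finite_edges by (rule finite_subset)
  have "(\<lambda>\<tau>. W (Suc m) r (ed \<tau>)) ` Q r m \<subseteq> vs.span (W (Suc m) r ` E0)"
  proof
    fix w assume "w \<in> (\<lambda>\<tau>. W (Suc m) r (ed \<tau>)) ` Q r m"
    then obtain \<tau> where t: "\<tau> \<in> Q r m" "w = W (Suc m) r (ed \<tau>)" by blast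
    have "ed \<tau> \<in> edges ?G" using sub t(1) by blast
    then obtain i where "ed \<tau> \<in> (boot_step ?G (star r) ^^ i) E0" using cl by blast
    then show "w \<in> vs.span (W (Suc m) r ` E0)" using W_closure t(2) by blast
  qed
  then have "card ((\<lambda>\<tau>. W (Suc m) r (ed \<tau>)) ` Q r m) \<le> card (W (Suc m) r ` E0)"
    using vs.independent_span_bound[OF _ indep_Wt] fE0 by blast
  also have "\<dots> \<le> card E0" using fE0 by (rule card_image_le)
  finally show ?thesis using inj_Wt[of m r] by (simp add: card_image)
qed



definition AA :: "nat \<Rightarrow> nat \<Rightarrow> nat list set" where
  "AA k s = {u. length u = k \<and> sum_list u \<le> s}"

lemma AA_Suc: "AA (Suc k) s = (\<Union>h\<in>{..s}. (\<lambda>u. h # u) ` AA k (s - h))"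
proof (intro set_eqI iffI)
  fix u assume "u \<in> AA (Suc k) s"
  then obtain h w where u: "u = h # w" "length w = k" "h + sum_list w \<le> s"
    by (cases u) (auto simp: AA_def)
  then have "w \<in> AA k (s - h)" "h \<in> {..s}" by (auto simp: AA_def)
  then show "u \<in> (\<Union>h\<in>{..s}. (\<lambda>u. h # u) ` AA k (s - h))"
    using u(1) by blast
next
  fix u assume "u \<in> (\<Union>h\<in>{..s}. (\<lambda>u. h # u) ` AA k (s - h))"
  then show "u \<in> AA (Suc k) s" by (auto simp: AA_def)
qed

lemma finite_AA: "finite (AA k s)"
proof -
  have "AA k s \<subseteq> {u. set u \<subseteq> {..s} \<and> length u = k}"
    using member_le_sum_list by (fastforce simp: AA_def)
  then show ?thesis by (rule finite_subset) (rule finite_lists_length_eq, simp)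
qed

lemma card_AA: "card (AA k s) = (k + s) choose k"
proof (induction k arbitrary: s)
  case 0
  have "AA 0 s = {[]}" by (auto simp: AA_def)
  then show ?case by simp
next
  case (Suc k)
  have "card (AA (Suc k) s) = (\<Sum>h\<in>{..s}. card ((\<lambda>u. h # u) ` AA k (s - h)))"
    unfolding AA_Suc by (rule card_UN_disjoint) (auto simp: finite_AA)
  also have "\<dots> = (\<Sum>h\<in>{..s}. (k + (s - h)) choose k)"
    by (rule sum.cong[OF refl]) (simp add: card_image Suc.IH)
  also have "\<dots> = (\<Sum>j\<in>{..s}. (k + j) choose k)"
    by (rule sum.reindex_bij_witness[of _ "\<lambda>j. s - j" "\<lambda>j. s - j"]) auto
  also have "\<dots> = (k + s + 1) choose (k + 1)" by (rule choose_rising_sum(1))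
  finally show ?case by simp
qed

lemma card_Q:
  assumes "0 < r"
  shows "card (Q r m) = (Suc m + r) choose (Suc (Suc m))"
proof -
  have "bij_betw (\<lambda>(a, b, z). a # (b - a - 1) # z) (Q r m) (AA (Suc (Suc m)) (r - 1))"
  proof (rule bij_betw_byWitness[where f' = "\<lambda>u. (u ! 0, u ! 0 + u ! 1 + 1, drop 2 u)"])
    show "\<forall>x\<in>Q r m. (\<lambda>u. (u ! 0, u ! 0 + u ! 1 + 1, drop 2 u)) ((\<lambda>(a, b, z). a # (b - a - 1) # z) x) = x"
      by (auto simp: Q_def)
    show "\<forall>y\<in>AA (Suc (Suc m)) (r - 1). (\<lambda>(a, b, z). a # (b - a - 1) # z) ((\<lambda>u. (u ! 0, u ! 0 + u ! 1 + 1, drop 2 u)) y) = y"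
    proof
      fix y assume "y \<in> AA (Suc (Suc m)) (r - 1)"
      then obtain p q w where "y = p # q # w" by (auto simp: AA_def length_Suc_conv)
      then show "(\<lambda>(a, b, z). a # (b - a - 1) # z) ((\<lambda>u. (u ! 0, u ! 0 + u ! 1 + 1, drop 2 u)) y) = y"
        by simp
    qed
    show "(\<lambda>(a, b, z). a # (b - a - 1) # z) ` Q r m \<subseteq> AA (Suc (Suc m)) (r - 1)"
      using assms by (auto simp: Q_def AA_def)
    show "(\<lambda>u. (u ! 0, u ! 0 + u ! 1 + 1, drop 2 u)) ` AA (Suc (Suc m)) (r - 1) \<subseteq> Q r m"
    proof
      fix t assume "t \<in> (\<lambda>u. (u ! 0, u ! 0 + u ! 1 + 1, drop 2 u)) ` AA (Suc (Suc m)) (r - 1)"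
      then obtain y where y: "y \<in> AA (Suc (Suc m)) (r - 1)" "t = (y ! 0, y ! 0 + y ! 1 + 1, drop 2 y)"
        by blast
      then obtain p q w where "y = p # q # w" by (auto simp: AA_def length_Suc_conv)
      then show "t \<in> Q r m" using y assms by (auto simp: AA_def Q_def)
    qed
  qed
  then have "card (Q r m) = card (AA (Suc (Suc m)) (r - 1))" by (rule bij_betw_same_card)
  also have "\<dots> = (Suc (Suc m) + (r - 1)) choose (Suc (Suc m))" by (rule card_AA)
  also have "Suc (Suc m) + (r - 1) = Suc m + r" using assms by simp
  finally show ?thesis .
qed



lemma boot_sub: "F \<subseteq> boot_step G H F"
  by (simp add: boot_step_def)

lemma funpow_add_sub: "(boot_step G H ^^ i) X \<subseteq> (boot_step G H ^^ (i + k)) X"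
proof (induction k)
  case 0 then show ?case by simp
next
  case (Suc k)
  then show ?case using boot_sub[of "(boot_step G H ^^ (i + k)) X" G H] by auto
qed

lemma funpow_le: "i \<le> j \<Longrightarrow> (boot_step G H ^^ i) X \<subseteq> (boot_step G H ^^ j) X"
  using funpow_add_sub[where G=G and H=H and i=i and X=X and k="j - i"] by simp

lemma iter_edges: "X \<subseteq> edges G \<Longrightarrow> (boot_step G H ^^ i) X \<subseteq> edges G"
  by (induction i) (auto simp: boot_step_def)

lemma boot_stepI:
  assumes "e \<in> edges G" "C \<in> copies G H" "e \<in> C" "C - {e} \<subseteq> F"
  shows "e \<in> boot_step G H F"
proof -
  have "e \<in> {e \<in> edges G. \<exists>C\<in>copies G H. e \<in> C \<and> C - {e} \<subseteq> F}"
    using assms by blast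
  then show ?thesis unfolding boot_step_def by (rule UnI2)
qed

lemma adj_neq: "{x, y} \<in> edges (Kpow n d) \<Longrightarrow> x \<noteq> y"
  by (erule adjE) auto

lemma fire:
  fixes x y0 :: "nat list" and E0 :: "nat list set set" and n d r :: nat
  defines "Cl \<equiv> (\<Union>i. (boot_step (Kpow n d) (star r) ^^ i) E0)"
  assumes E0: "E0 \<subseteq> edges (Kpow n d)" and x: "x \<in> V n d" and r: "0 < r"
    and Y: "finite Y" "r \<le> card Y" "\<forall>y\<in>Y. {x, y} \<in> Cl"
    and e0: "{x, y0} \<in> edges (Kpow n d)"
  shows "{x, y0} \<in> Cl"
proof (cases "{x, y0} \<in> Cl")
  case True then show ?thesis .
next
  case False
  let ?G = "Kpow n d"
  let ?E = "\<lambda>i. (boot_step ?G (star r) ^^ i) E0"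
  have ClE: "Cl \<subseteq> edges ?G" unfolding Cl_def using iter_edges[OF E0] by blast
  obtain Y' where Y': "Y' \<subseteq> Y" "card Y' = r" "finite Y'"
    using obtain_subset_with_card_n[OF Y(2)] by blast
  have "\<forall>y\<in>Y'. \<exists>i. {x, y} \<in> ?E i" using Y(3) Y'(1) unfolding Cl_def by blast
  then obtain \<iota> where \<iota>: "\<forall>y\<in>Y'. {x, y} \<in> ?E (\<iota> y)" by metis
  define M where "M = Max (\<iota> ` Y')"
  have inM: "{x, y} \<in> ?E M" if "y \<in> Y'" for y
  proof -
    have "\<iota> y \<le> M" unfolding M_def using Y'(3) that by (intro Max_ge) auto
    then show ?thesis using funpow_le[where i="\<iota> y" and j=M and G="?G" and H="star r" and X=E0] \<iota> that by blast
  qed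
  obtain h where h: "bij_betw h {0..<r} Y'" using ex_bij_betw_nat_finite[OF Y'(3)] Y'(2) by auto
  have y0Y: "y0 \<notin> Y'" using False Y(3) Y'(1) by blast
  have xY: "x \<notin> Y'"
  proof
    assume "x \<in> Y'"
    then have "{x, x} \<in> edges ?G" using inM[of x] iter_edges[OF E0] by blast
    then show False using adj_neq by blast
  qed
  have xy0: "x \<noteq> y0" using adj_neq[OF e0] .
  have y0V: "y0 \<in> V n d" using e0 by (rule adjE)
  have YV: "y \<in> V n d" if "y \<in> Y'" for y
  proof -
    have "{x, y} \<in> edges ?G" using inM[OF that] iter_edges[OF E0] by blast
    then show ?thesis by (rule adjE)
  qed
  define f where "f i = (if i = 0 then x else if i = 1 then y0 else h (i - 2))" for i
  have hY: "h (i - 2) \<in> Y'" if "2 \<le> i" "i \<le> r + 1" for i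
    using h that unfolding bij_betw_def by auto
  have f0: "f 0 = x" and f1: "f 1 = y0" and f2: "\<And>i. 2 \<le> i \<Longrightarrow> f i = h (i - 2)"
    by (auto simp: f_def)
  have inj: "inj_on f {0..r+1}"
  proof (rule inj_onI)
    fix i i' assume i: "i \<in> {0..r+1}" and i': "i' \<in> {0..r+1}" and eq: "f i = f i'"
    consider "i = 0" | "i = 1" | "2 \<le> i" by linarith
    then show "i = i'"
    proof cases
      case 1
      then show ?thesis using eq xy0 xY hY[of i'] i' by (cases "i' = 0"; cases "i' = 1") (auto simp: f_def)
    next
      case 2
      then show ?thesis using eq xy0 y0Y hY[of i'] i' by (cases "i' = 0"; cases "i' = 1") (auto simp: f_def)
    next
      case 3
      show ?thesis
      proof (cases "2 \<le> i'")
        case True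
        then have "h (i - 2) = h (i' - 2)" using eq 3 by (simp add: f2)
        moreover have "i - 2 \<in> {0..<r}" "i' - 2 \<in> {0..<r}" using i i' 3 True by auto
        ultimately have "i - 2 = i' - 2" using h unfolding bij_betw_def by (auto dest: inj_onD)
        then show ?thesis using 3 True by simp
      next
        case False
        then show ?thesis using eq xy0 xY y0Y hY[of i] i 3 by (cases "i' = 0") (auto simp: f_def)
      qed
    qed
  qed
  have fV: "f ` {0..r+1} \<subseteq> verts ?G"
  proof
    fix v assume "v \<in> f ` {0..r+1}"
    then obtain i where i: "i \<in> {0..r+1}" "v = f i" by blast
    show "v \<in> verts ?G"
      using x y0V YV hY[of i] i by (cases "i = 0"; cases "i = 1") (auto simp: f_def verts_Kpow)
  qed
  have fi: "f ` {0, i} = {x, f i}" for i by (simp add: f0)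
  have Ci: "{x, f i} \<in> ?E M" if "2 \<le> i" "i \<le> r + 1" for i
    using inM hY that f2 by simp
  have fE: "\<forall>e\<in>edges (star r). f ` e \<in> edges ?G"
  proof
    fix e assume "e \<in> edges (star r)"
    then obtain i where i: "e = {0, i}" "1 \<le> i" "i \<le> r + 1" by (auto simp: edges_star)
    show "f ` e \<in> edges ?G"
    proof (cases "i = 1")
      case True then show ?thesis using i e0 fi f1 f0 by simp
    next
      case False
      then have "{x, f i} \<in> ?E M" using i Ci[of i] by simp
      then have "{x, f i} \<in> edges ?G" using iter_edges[OF E0, where H="star r" and i=M] by blast
      then show ?thesis using i fi by simp
    qed
  qed
  define C where "C = (\<lambda>e. f ` e) ` edges (star r)"
  have Cc: "C \<in> copies ?G (star r)"
    unfolding copies_def mem_Collect_eq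
    by (rule exI[where x=f]) (use inj fV fE in \<open>simp add: C_def verts_star\<close>)
  have eC: "{x, y0} \<in> C"
  proof -
    have "{0, 1} \<in> edges (star r)" by (auto simp: edges_star)
    then show ?thesis unfolding C_def using fi[of 1] f1 by (metis image_eqI)
  qed
  have CM: "C - {{x, y0}} \<subseteq> ?E M"
  proof
    fix e assume "e \<in> C - {{x, y0}}"
    then obtain i where i: "e = f ` {0, i}" "1 \<le> i" "i \<le> r + 1" "e \<noteq> {x, y0}"
      by (auto simp: C_def edges_star)
    then have "i \<noteq> 1" using fi f1 by auto
    then show "e \<in> ?E M" using i Ci[of i] fi by auto
  qed
  have "{x, y0} \<in> boot_step ?G (star r) (?E M)"
    by (rule boot_stepI[OF e0 Cc eC CM])
  then have "{x, y0} \<in> ?E (Suc M)" by simp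
  then show ?thesis unfolding Cl_def by blast
qed



lemma sum_update_less:
  "i < length x \<Longrightarrow> v < x ! i \<Longrightarrow> sum_list (x[i := v]) < sum_list (x::nat list)"
proof (induction x arbitrary: i)
  case Nil then show ?case by simp
next
  case (Cons a x)
  then show ?case by (cases i) auto
qed

lemma Est_edges:
  assumes "r < n"
  shows "ed ` Q r m \<subseteq> edges (Kpow n (Suc m))"
proof
  fix e assume "e \<in> ed ` Q r m"
  then obtain a b z where t: "(a, b, z) \<in> Q r m" "e = {a # z, b # z}" by (auto simp: ed_def)
  have ab: "a < b" "length z = m" "b + sum_list z \<le> r" using t(1) by (auto simp: Q_def)
  have zc: "z ! k < n" if "k < m" for k
    using elem_le_sum_list[of k z] ab that assms by simp
  have aV: "a # z \<in> V n (Suc m)"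
    unfolding V_def using ab zc assms by (auto simp: nth_Cons split: nat.splits)
  have bV: "b # z \<in> V n (Suc m)"
    unfolding V_def using ab zc assms by (auto simp: nth_Cons split: nat.splits)
  have "{a # z, b # z} \<in> edges (Kpow n (Suc m))"
    by (rule adjI[OF aV bV, of 0]) (use ab in \<open>auto simp: nth_Cons split: nat.splits\<close>)
  then show "e \<in> edges (Kpow n (Suc m))" using t(2) by simp
qed

lemma all_edges:
  fixes m r n :: nat
  defines "Cl \<equiv> (\<Union>i. (boot_step (Kpow n (Suc m)) (star r) ^^ i) (ed ` Q r m))"
  assumes r: "0 < r" and rn: "r < n"
  shows "x \<in> V n (Suc m) \<Longrightarrow> {x, y} \<in> edges (Kpow n (Suc m)) \<Longrightarrow> {x, y} \<in> Cl"
proof (induction "sum_list x" arbitrary: x y rule: less_induct)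
  case less
  let ?G = "Kpow n (Suc m)"
  have EstE: "ed ` Q r m \<subseteq> edges ?G" using Est_edges[OF rn] .
  have lenx: "length x = Suc m" and xc: "\<forall>i<Suc m. x ! i < n" using less.prems(1) by (auto simp: V_def)
  define Lo where "Lo = (\<lambda>(j, v). x[j := v]) ` (SIGMA j:{..<Suc m}. {..<x ! j})"
  have Lo_props: "{x, w} \<in> edges ?G \<and> sum_list w < sum_list x" if "w \<in> Lo" for w
  proof -
    from that obtain j v where jv: "j < Suc m" "v < x ! j" "w = x[j := v]" by (auto simp: Lo_def)
    have wV: "w \<in> V n (Suc m)"
      unfolding V_def using jv lenx xc by (auto simp: nth_list_update)
    have "{x, w} \<in> edges ?G"
      by (rule adjI[OF less.prems(1) wV jv(1)]) (use jv lenx in \<open>auto simp: nth_list_update\<close>)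
    moreover have "sum_list w < sum_list x" using sum_update_less[of j x v] jv lenx by simp
    ultimately show ?thesis by blast
  qed
  have LoCl: "\<forall>w\<in>Lo. {x, w} \<in> Cl"
  proof
    fix w assume w: "w \<in> Lo"
    have wV: "w \<in> V n (Suc m)" using Lo_props[OF w] by (auto elim: adjE)
    have "{w, x} \<in> edges ?G" using Lo_props[OF w] by (simp add: insert_commute)
    then have "{w, x} \<in> Cl" using less.hyps[of w x] Lo_props[OF w] wV by blast
    then show "{x, w} \<in> Cl" by (simp add: insert_commute)
  qed
  have injLo: "inj_on (\<lambda>(j, v). x[j := v]) (SIGMA j:{..<Suc m}. {..<x ! j})"
  proof (rule inj_onI, clarify)
    fix j v j' v'
    assume j: "j < Suc m" "v < x ! j" and j': "j' < Suc m" "v' < x ! j'" and eq: "x[j := v] = x[j' := v']"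
    have "j = j'"
    proof (rule ccontr)
      assume "j \<noteq> j'"
      then have "x[j := v] ! j = x[j' := v'] ! j" using eq by simp
      then have "v = x ! j" using \<open>j \<noteq> j'\<close> j lenx by (simp add: nth_list_update)
      then show False using j by simp
    qed
    moreover have "x[j := v] ! j = x[j' := v'] ! j" using eq by simp
    then have "v = v'" using \<open>j = j'\<close> j lenx by (simp add: nth_list_update)
    ultimately show "j = j' \<and> v = v'" by simp
  qed
  have fLo: "finite Lo" by (simp add: Lo_def)
  have cLo: "card Lo = sum_list x"
  proof -
    have "card Lo = card (SIGMA j:{..<Suc m}. {..<x ! j})"
      unfolding Lo_def using injLo by (rule card_image)
    also have "\<dots> = (\<Sum>j<Suc m. x ! j)" by simp
    also have "\<dots> = sum_list x" using lenx by (simp add: sum_list_sum_nth atLeast0LessThan)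
    finally show ?thesis .
  qed
  have fire': "{x, y} \<in> Cl" if "finite Y" "r \<le> card Y" "\<forall>w\<in>Y. {x, w} \<in> Cl" for Y
    using fire[OF EstE less.prems(1) r that(1,2) _ less.prems(2)] that(3) unfolding Cl_def by blast
  show ?case
  proof (cases "r \<le> sum_list x")
    case True
    then show ?thesis using fire'[OF fLo _ LoCl] cLo by simp
  next
    case False
    obtain a z where xz: "x = a # z" using lenx by (cases x) auto
    have lz: "length z = m" using lenx xz by simp
    define Up where "Up = (\<lambda>b. b # z) ` {a<..r - sum_list z}"
    have UpCl: "\<forall>w\<in>Up. {x, w} \<in> Cl"
    proof
      fix w assume "w \<in> Up"
      then obtain b where b: "a < b" "b \<le> r - sum_list z" "w = b # z" by (auto simp: Up_def)
      have "(a, b, z) \<in> Q r m" using b lz by (auto simp: Q_def)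
      then have "ed (a, b, z) \<in> (boot_step ?G (star r) ^^ 0) (ed ` Q r m)" by simp
      then have "ed (a, b, z) \<in> Cl" unfolding Cl_def by blast
      then show "{x, w} \<in> Cl" using b xz by (simp add: ed_def)
    qed
    have fUp: "finite Up" by (simp add: Up_def)
    have cUp: "card Up = r - sum_list z - a"
      unfolding Up_def by (subst card_image) (auto simp: inj_on_def)
    have disj: "Lo \<inter> Up = {}"
    proof -
      have "hd w \<le> a" if "w \<in> Lo" for w
      proof -
        from that obtain j v where jv: "j < Suc m" "v < x ! j" "w = x[j := v]" by (auto simp: Lo_def)
        then show ?thesis using xz by (cases j) auto
      qed
      moreover have "a < hd w" if "w \<in> Up" for w using that by (auto simp: Up_def)
      ultimately show ?thesis by (meson disjoint_iff not_le)
    qed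
    have "card (Lo \<union> Up) = r"
      using card_Un_disjoint[OF fLo fUp disj] cLo cUp False xz by simp
    then show ?thesis using fire'[of "Lo \<union> Up"] fLo fUp LoCl UpCl by auto
  qed
qed

lemma perc_Est:
  assumes "0 < r" "r < n"
  shows "percolating (Kpow n (Suc m)) (star r) (ed ` Q r m)"
  unfolding percolating_def
proof
  show sub: "ed ` Q r m \<subseteq> edges (Kpow n (Suc m))" using Est_edges[OF assms(2)] .
  show "(\<Union>i. (boot_step (Kpow n (Suc m)) (star r) ^^ i) (ed ` Q r m)) = edges (Kpow n (Suc m))"
  proof
    show "(\<Union>i. (boot_step (Kpow n (Suc m)) (star r) ^^ i) (ed ` Q r m)) \<subseteq> edges (Kpow n (Suc m))"
      using iter_edges[OF sub] by blast
    show "edges (Kpow n (Suc m)) \<subseteq> (\<Union>i. (boot_step (Kpow n (Suc m)) (star r) ^^ i) (ed ` Q r m))"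
    proof
      fix e assume "e \<in> edges (Kpow n (Suc m))"
      then obtain x y where e: "e = {x, y}" "{x, y} \<in> edges (Kpow n (Suc m))" by (metis edge_form)
      have "x \<in> V n (Suc m)" using e(2) by (rule adjE)
      then show "e \<in> (\<Union>i. (boot_step (Kpow n (Suc m)) (star r) ^^ i) (ed ` Q r m))"
        using all_edges[OF assms] e by blast
    qed
  qed
qed

theorem theorem3p6:
  fixes n r d :: nat
  assumes "0 < n" and "0 < r" and "0 < d" and "n \<ge> r + 1"
  shows "m_e (Kpow n d) r = (d + r) choose (d + 1)"
proof -
  obtain m where d: "d = Suc m" using assms(3) by (cases d) auto
  have rn: "r < n" using assms(4) by simp
  have perc: "percolating (Kpow n (Suc m)) (star r) (ed ` Q r m)" by (rule perc_Est[OF assms(2) rn])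
  have low: "card (Q r m) \<le> card E0" if "percolating (Kpow n (Suc m)) (star r) E0" for E0
    using lower[OF that Est_edges[OF rn]] .
  have cE: "card (ed ` Q r m) = card (Q r m)"
    using low[OF perc] card_image_le[OF finite_Q, of ed r m] by simp
  have "wsat (Kpow n (Suc m)) (star r) = card (Q r m)"
    unfolding wsat_def
  proof (rule Least_equality)
    show "\<exists>E0. percolating (Kpow n (Suc m)) (star r) E0 \<and> card E0 = card (Q r m)"
      using perc cE by blast
    fix k assume "\<exists>E0. percolating (Kpow n (Suc m)) (star r) E0 \<and> card E0 = k"
    then show "card (Q r m) \<le> k" using low by blast
  qed
  then show ?thesis using card_Q[OF assms(2), of m] d by (simp add: m_e_def)
qed


end
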